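(* Let $T$ be the theory of the Rado graph in $\mathcal{L}=\{R\}$, $\mathcal{U}$ a monster model of $T$ and $M\prec\mathcal{U}$ a countable elementary substructure, and let $W$ be a Borel graphon. Then the function $\mu_W$ defined below is an $M$-invariant Keisler measure on $\mathcal{L}_x(\mathcal{U})$; moreover, $\mu_W$ does not concentrate on points (i.e. $\mu_W(x=a)=0$ for all $a\in\mathcal{U}$).
   Context: A graphon is a measurable symmetric $W\colon[0,1]^2\to[0,1]$; Borel if Borel measurable. $\mathfrak{m}$ is Lebesgue measure on $[0,1]$. $S^{*}_x(M)$ is the set of types in $S_x(M)$ not realized in $M$. $\lambda$ is the Keisler measure on $\mathcal{L}_x(\mathcal{U})$ with $\lambda(\bigwedge_{i\le n}R(x,a_i)\wedge\bigwedge_{j\le m}\neg R(x,b_j))=2^{-(n+m)}$ for distinct $a_i,b_j\in\mathcal{U}$; its restriction to $M$ is regarded as a Borel probability measure on $S^{*}_x(M)$. Fix an isomorphism of measure spaces $F\colon(S^{*}_x(M),\lambda)\to([0,1],\mathfrak{m})$ and write $W(p,q)=W(F(p),F(q))$ for $p,q\in S^{*}_x(M)$. A basic formula is $\varphi(x)=\bigwedge_{a\in A}R(x,a)\wedge\bigwedge_{b\in B}\neg R(x,b)\wedge\bigwedge_{c\in C}R(x,c)\wedge\bigwedge_{d\in D}\neg R(x,d)\wedge E(x)$ with $A,B\subseteq M$ finite disjoint, $C,D\subseteq\mathcal{U}\setminus M$ finite disjoint, and $E(x)$ a formula in the language of equality with parameters from $\mathcal{U}$; it is trivial if $E(x)$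 implies $x$ lies in a finite subset of $\mathcal{U}$. Define $\mu_W(\varphi)=0$ if $\varphi$ is trivial and otherwise $\mu_W(\varphi)=\int_{p\in S^{*}_x(M)}\mathbf{1}_{\psi_A\wedge\psi_B}(p)\prod_{c\in C}W(p,\operatorname{tp}(c/M))\prod_{d\in D}(1-W(p,\operatorname{tp}(d/M)))\,d\lambda$, where $\psi_A=\bigwedge_{a\in A}R(x,a)$, $\psi_B=\bigwedge_{b\in B}\neg R(x,b)$; $\mu_W$ is extended to arbitrary formulas by writing them (via quantifier elimination) as finite disjoint unions of basic formulas and adding. A Keisler measure on $\mathcal{L}_x(\mathcal{U})$ is a finitely additive probability measure on formulas modulo equivalence; it is $M$-invariant if $\mu(\varphi(x,\bar a))=\mu(\varphi(x,\bar b))$ for all $\mathcal{L}$-formulas $\varphi$ and $\bar a\equiv_M\bar b$. *)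

theory Defs
  imports "HOL-Probability.Probability"
begin

section \<open>First-order syntax for the language {R} with parameters (de Bruijn variables)\<close>

datatype 'u trm = Var nat | Par 'u

datatype 'u fm =
    FFalse
  | Rel "'u trm" "'u trm"
  | Eq "'u trm" "'u trm"
  | Neg "'u fm"
  | Conj "'u fm" "'u fm"
  | Ex "'u fm"

definition TT :: "'u fm" where "TT = Neg FFalse"
definition Disj :: "'u fm \<Rightarrow> 'u fm \<Rightarrow> 'u fm" where
  "Disj \<phi> \<psi> = Neg (Conj (Neg \<phi>) (Neg \<psi>))"

fun tval :: "(nat \<Rightarrow> 'u) \<Rightarrow> 'u trm \<Rightarrow> 'u" where
  "tval e (Var i) = e i"
| "tval e (Par a) = a"

fun sat :: "'u set \<Rightarrow> ('u \<Rightarrow> 'u \<Rightarrow> bool) \<Rightarrow> (nat \<Rightarrow> 'u) \<Rightarrow> 'u fm \<Rightarrow> bool" where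
  "sat D R e FFalse = False"
| "sat D R e (Rel s t) = R (tval e s) (tval e t)"
| "sat D R e (Eq s t) = (tval e s = tval e t)"
| "sat D R e (Neg \<phi>) = (\<not> sat D R e \<phi>)"
| "sat D R e (Conj \<phi> \<psi>) = (sat D R e \<phi> \<and> sat D R e \<psi>)"
| "sat D R e (Ex \<phi>) = (\<exists>u\<in>D. sat D R (case_nat u e) \<phi>)"

fun tfv :: "'u trm \<Rightarrow> nat set" where
  "tfv (Var i) = {i}"
| "tfv (Par a) = {}"

fun fv :: "'u fm \<Rightarrow> nat set" where
  "fv FFalse = {}"
| "fv (Rel s t) = tfv s \<union> tfv t"
| "fv (Eq s t) = tfv s \<union> tfv t"
| "fv (Neg \<phi>) = fv \<phi>"
| "fv (Conj \<phi> \<psi>) = fv \<phi> \<union> fv \<psi>"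
| "fv (Ex \<phi>) = (\<lambda>i. i - 1) ` (fv \<phi> - {0})"

fun tpar :: "'u trm \<Rightarrow> 'u set" where
  "tpar (Var i) = {}"
| "tpar (Par a) = {a}"

fun params :: "'u fm \<Rightarrow> 'u set" where
  "params FFalse = {}"
| "params (Rel s t) = tpar s \<union> tpar t"
| "params (Eq s t) = tpar s \<union> tpar t"
| "params (Neg \<phi>) = params \<phi>"
| "params (Conj \<phi> \<psi>) = params \<phi> \<union> params \<psi>"
| "params (Ex \<phi>) = params \<phi>"

fun norel :: "'u fm \<Rightarrow> bool" where
  "norel FFalse = True"
| "norel (Rel s t) = False"
| "norel (Eq s t) = True"
| "norel (Neg \<phi>) = norel \<phi>"
| "norel (Conj \<phi> \<psi>) = (norel \<phi> \<and> norel \<psi>)"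
| "norel (Ex \<phi>) = norel \<phi>"

text \<open>Instantiation: free variable i+1 (at binder depth k: k+i+1) is replaced by the
  parameter a!i, for i < length a; the variable x = Var 0 is left alone.\<close>
fun tinst :: "nat \<Rightarrow> 'u list \<Rightarrow> 'u trm \<Rightarrow> 'u trm" where
  "tinst k a (Var i) = (if k < i \<and> i - k - 1 < length a then Par (a ! (i - k - 1)) else Var i)"
| "tinst k a (Par b) = Par b"

fun inst :: "nat \<Rightarrow> 'u list \<Rightarrow> 'u fm \<Rightarrow> 'u fm" where
  "inst k a FFalse = FFalse"
| "inst k a (Rel s t) = Rel (tinst k a s) (tinst k a t)"
| "inst k a (Eq s t) = Eq (tinst k a s) (tinst k a t)"
| "inst k a (Neg \<phi>) = Neg (inst k a \<phi>)"
| "inst k a (Conj \<phi> \<psi>) = Conj (inst k a \<phi>) (inst k a \<psi>)"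
| "inst k a (Ex \<phi>) = Ex (inst (Suc k) a \<phi>)"

definition rado_model :: "('u \<Rightarrow> 'u \<Rightarrow> bool) \<Rightarrow> bool" where
  "rado_model R \<longleftrightarrow> (\<forall>x. \<not> R x x) \<and> (\<forall>x y. R x y \<longrightarrow> R y x) \<and>
     (\<forall>A B. finite A \<longrightarrow> finite B \<longrightarrow> A \<inter> B = {} \<longrightarrow>
        (\<exists>z. z \<notin> A \<union> B \<and> (\<forall>a\<in>A. R z a) \<and> (\<forall>b\<in>B. \<not> R z b)))"

text \<open>Monster-model requirement used here: aleph_1-saturation.\<close>
definition aleph1_saturated :: "('u \<Rightarrow> 'u \<Rightarrow> bool) \<Rightarrow> bool" where
  "aleph1_saturated R \<longleftrightarrow> (\<forall>A \<Sigma>. countable A \<longrightarrow>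
     (\<forall>\<phi>\<in>\<Sigma>. fv \<phi> \<subseteq> {0} \<and> params \<phi> \<subseteq> A) \<longrightarrow>
     (\<forall>\<Sigma>0\<subseteq>\<Sigma>. finite \<Sigma>0 \<longrightarrow> (\<exists>u. \<forall>\<phi>\<in>\<Sigma>0. sat UNIV R (\<lambda>_. u) \<phi>)) \<longrightarrow>
     (\<exists>u. \<forall>\<phi>\<in>\<Sigma>. sat UNIV R (\<lambda>_. u) \<phi>))"

definition elem_sub :: "('u \<Rightarrow> 'u \<Rightarrow> bool) \<Rightarrow> 'u set \<Rightarrow> bool" where
  "elem_sub R M \<longleftrightarrow> (\<forall>\<phi> e. params \<phi> \<subseteq> M \<longrightarrow> range e \<subseteq> M \<longrightarrow>
      (sat M R e \<phi> \<longleftrightarrow> sat UNIV R e \<phi>))"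

text \<open>L_x(U): formulas with free variables among {x} = {Var 0}, parameters from U = UNIV.\<close>
definition Lx :: "'u fm set" where "Lx = {\<phi>. fv \<phi> \<subseteq> {0}}"

definition holds :: "('u \<Rightarrow> 'u \<Rightarrow> bool) \<Rightarrow> 'u fm \<Rightarrow> 'u \<Rightarrow> bool" where
  "holds R \<phi> u = sat UNIV R (\<lambda>_. u) \<phi>"

definition keisler_measure :: "('u \<Rightarrow> 'u \<Rightarrow> bool) \<Rightarrow> ('u fm \<Rightarrow> real) \<Rightarrow> bool" where
  "keisler_measure R \<mu> \<longleftrightarrow>
     (\<forall>\<phi>\<in>Lx. 0 \<le> \<mu> \<phi>) \<and>
     (\<forall>\<phi>\<in>Lx. \<forall>\<psi>\<in>Lx. (\<forall>u. holds R \<phi> u \<longleftrightarrow> holds R \<psi> u) \<longrightarrow> \<mu> \<phi> = \<mu> \<psi>) \<and>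
     \<mu> TT = 1 \<and>
     (\<forall>\<phi>\<in>Lx. \<forall>\<psi>\<in>Lx. (\<forall>u. \<not> (holds R \<phi> u \<and> holds R \<psi> u)) \<longrightarrow>
        \<mu> (Disj \<phi> \<psi>) = \<mu> \<phi> + \<mu> \<psi>)"

definition same_type_over :: "('u \<Rightarrow> 'u \<Rightarrow> bool) \<Rightarrow> 'u set \<Rightarrow> 'u list \<Rightarrow> 'u list \<Rightarrow> bool" where
  "same_type_over R M a b \<longleftrightarrow> length a = length b \<and>
     (\<forall>\<psi>. params \<psi> \<subseteq> M \<longrightarrow> fv \<psi> \<subseteq> {..<length a} \<longrightarrow>
        (sat UNIV R (nth a) \<psi> \<longleftrightarrow> sat UNIV R (nth b) \<psi>))"

text \<open>M-invariance: mu(phi(x,a)) = mu(phi(x,b)) for L-formulas phi(x,y1..yn)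
  (x = Var 0, y_i = Var i) and a \<equiv>_M b.\<close>
definition M_invariant :: "('u \<Rightarrow> 'u \<Rightarrow> bool) \<Rightarrow> 'u set \<Rightarrow> ('u fm \<Rightarrow> real) \<Rightarrow> bool" where
  "M_invariant R M \<mu> \<longleftrightarrow> (\<forall>\<phi> a b. params \<phi> = {} \<longrightarrow> fv \<phi> \<subseteq> {..length a} \<longrightarrow>
     same_type_over R M a b \<longrightarrow> \<mu> (inst 0 a \<phi>) = \<mu> (inst 0 b \<phi>))"

text \<open>By quantifier elimination a non-realised type p over M is determined by the set
  {a \<in> M. R(x,a) \<in> p}, and every subset of M arises; so S*_x(M) is identified with
  the (extensional) functions M \<rightarrow> bool, with its product (= Borel) sigma-algebra.
  lambda is then the fair coin-flipping product measure.\<close>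
definition lam :: "'u set \<Rightarrow> ('u \<Rightarrow> bool) measure" where
  "lam M = PiM M (\<lambda>_. measure_pmf (bernoulli_pmf (1/2)))"

text \<open>tp(c/M) for c \<notin> M.\<close>
definition tpM :: "('u \<Rightarrow> 'u \<Rightarrow> bool) \<Rightarrow> 'u set \<Rightarrow> 'u \<Rightarrow> ('u \<Rightarrow> bool)" where
  "tpM R M c = restrict (\<lambda>a. R c a) M"

definition unit_interval :: "real measure" where
  "unit_interval = restrict_space lborel {0..1}"

definition measure_iso :: "'a measure \<Rightarrow> ('a \<Rightarrow> real) \<Rightarrow> bool" where
  "measure_iso L F \<longleftrightarrow> bij_betw F (space L) {0..1} \<and>
     F \<in> L \<rightarrow>\<^sub>M unit_interval \<and>
     the_inv_into (space L) F \<in> unit_interval \<rightarrow>\<^sub>M L \<and>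
     (\<forall>S\<in>sets L. emeasure unit_interval (F ` S) = emeasure L S)"

definition borel_graphon :: "(real \<Rightarrow> real \<Rightarrow> real) \<Rightarrow> bool" where
  "borel_graphon W \<longleftrightarrow>
     (\<forall>x\<in>{0..1}. \<forall>y\<in>{0..1}. W x y = W y x \<and> 0 \<le> W x y \<and> W x y \<le> 1) \<and>
     case_prod W \<in> borel_measurable (restrict_space borel ({0..1} \<times> {0..1}))"

definition conjR :: "'u list \<Rightarrow> 'u fm" where
  "conjR xs = foldr (\<lambda>a \<phi>. Conj (Rel (Var 0) (Par a)) \<phi>) xs TT"

definition conjNR :: "'u list \<Rightarrow> 'u fm" where
  "conjNR xs = foldr (\<lambda>a \<phi>. Conj (Neg (Rel (Var 0) (Par a))) \<phi>) xs TT"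

text \<open>The basic formula with A = set as, B = set bs, C = set cs, D = set ds and E.\<close>
definition basic_fm :: "'u list \<Rightarrow> 'u list \<Rightarrow> 'u list \<Rightarrow> 'u list \<Rightarrow> 'u fm \<Rightarrow> 'u fm" where
  "basic_fm as bs cs ds E =
     Conj (conjR as) (Conj (conjNR bs) (Conj (conjR cs) (Conj (conjNR ds) E)))"

definition is_basic :: "'u set \<Rightarrow> 'u list \<Rightarrow> 'u list \<Rightarrow> 'u list \<Rightarrow> 'u list \<Rightarrow> 'u fm \<Rightarrow> bool" where
  "is_basic M as bs cs ds E \<longleftrightarrow>
     set as \<subseteq> M \<and> set bs \<subseteq> M \<and> set as \<inter> set bs = {} \<and>
     set cs \<inter> M = {} \<and> set ds \<inter> M = {} \<and> set cs \<inter> set ds = {} \<and>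
     norel E \<and> E \<in> Lx"

definition trivial_E :: "('u \<Rightarrow> 'u \<Rightarrow> bool) \<Rightarrow> 'u fm \<Rightarrow> bool" where
  "trivial_E R E \<longleftrightarrow> (\<exists>S. finite S \<and> (\<forall>u. holds R E u \<longrightarrow> u \<in> S))"

definition muW :: "('u \<Rightarrow> 'u \<Rightarrow> bool) \<Rightarrow> 'u set \<Rightarrow> (real \<Rightarrow> real \<Rightarrow> real) \<Rightarrow> (('u \<Rightarrow> bool) \<Rightarrow> real)
     \<Rightarrow> 'u list \<Rightarrow> 'u list \<Rightarrow> 'u list \<Rightarrow> 'u list \<Rightarrow> 'u fm \<Rightarrow> real" where
  "muW R M W F as bs cs ds E =
     (if trivial_E R E then 0 else
      (LINT p|lam M.
         indicator {q. (\<forall>a\<in>set as. q a) \<and> (\<forall>b\<in>set bs. \<not> q b)} p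
         * (\<Prod>c\<in>set cs. W (F p) (F (tpM R M c)))
         * (\<Prod>d\<in>set ds. 1 - W (F p) (F (tpM R M d)))))"

end

theory Submission
  imports Defs
begin

definition ts :: "'u fm \<Rightarrow> 'u trm set" where "ts \<phi> = Var ` fv \<phi> \<union> Par ` params \<phi>"

definition isoR :: "bool \<Rightarrow> ('u\<Rightarrow>'u\<Rightarrow>bool) \<Rightarrow> (nat\<Rightarrow>'u) \<Rightarrow> (nat\<Rightarrow>'u) \<Rightarrow> 'u trm set \<Rightarrow> bool" where
 "isoR b R e e' T \<longleftrightarrow> (\<forall>s\<in>T. \<forall>t\<in>T. (b \<longrightarrow> (R (tval e s) (tval e t) \<longleftrightarrow> R (tval e' s) (tval e' t))) \<and>
     (tval e s = tval e t \<longleftrightarrow> tval e' s = tval e' t))"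

fun shiftT :: "'u trm \<Rightarrow> 'u trm" where "shiftT (Var i) = Var (Suc i)" | "shiftT (Par a) = Par a"

lemma tval_shift[simp]: "tval (case_nat u e) (shiftT t) = tval e t"
  by (cases t) auto

lemma finite_fv: "finite (fv \<phi>)"
proof (induction \<phi>)
  case (Rel s t) then show ?case by (cases s; cases t) auto
next
  case (Eq s t) then show ?case by (cases s; cases t) auto
qed auto

lemma finite_params: "finite (params \<phi>)"
proof (induction \<phi>)
  case (Rel s t) then show ?case by (cases s; cases t) auto
next
  case (Eq s t) then show ?case by (cases s; cases t) auto
qed auto

lemma finite_ts: "finite (ts \<phi>)" by (simp add: ts_def finite_fv finite_params)

lemma isoR_mono: "isoR b R e e' T \<Longrightarrow> T' \<subseteq> T \<Longrightarrow> isoR b R e e' T'"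
  unfolding isoR_def by blast

lemma isoR_sym: "isoR b R e e' T \<Longrightarrow> isoR b R e' e T"
  unfolding isoR_def by blast

lemma trm_in_ts: "s \<in> Var ` tfv s \<union> Par ` tpar s" by (cases s) auto

lemma ts_Ex: "ts \<psi> \<subseteq> insert (Var 0) (shiftT ` ts (Ex \<psi>))"
proof
  fix t assume "t \<in> ts \<psi>"
  then show "t \<in> insert (Var 0) (shiftT ` ts (Ex \<psi>))"
  proof (cases t)
    case (Var i)
    with \<open>t \<in> ts \<psi>\<close> have i: "i \<in> fv \<psi>" by (auto simp: ts_def)
    show ?thesis
    proof (cases i)
      case 0 then show ?thesis using Var by simp
    next
      case (Suc j)
      then have "j \<in> fv (Ex \<psi>)" using i by force
      then have "Var j \<in> ts (Ex \<psi>)" by (simp add: ts_def)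
      then show ?thesis using Var Suc by force
    qed
  next
    case (Par a)
    with \<open>t \<in> ts \<psi>\<close> have "a \<in> params (Ex \<psi>)" by (auto simp: ts_def)
    then have "Par a \<in> ts (Ex \<psi>)" by (simp add: ts_def)
    then show ?thesis using Par by force
  qed
qed

lemma isoR_transfer:
  assumes "isoR b R e e' T" "\<And>s. s \<in> T' \<Longrightarrow> \<exists>s'\<in>T. tval e1 s = tval e s' \<and> tval e1' s = tval e' s'"
  shows "isoR b R e1 e1' T'"
  unfolding isoR_def
proof (intro ballI)
  fix s t assume "s \<in> T'" "t \<in> T'"
  then obtain s' t' where "s'\<in>T" "t'\<in>T" "tval e1 s = tval e s'" "tval e1' s = tval e' s'"
    "tval e1 t = tval e t'" "tval e1' t = tval e' t'" using assms(2) by meson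
  then show "(b \<longrightarrow> (R (tval e1 s) (tval e1 t) \<longleftrightarrow> R (tval e1' s) (tval e1' t))) \<and>
     (tval e1 s = tval e1 t \<longleftrightarrow> tval e1' s = tval e1' t)"
    using assms(1) unfolding isoR_def by simp
qed

lemma rado_irr: "rado_model R \<Longrightarrow> \<not> R x x"
  unfolding rado_model_def by (drule conjunct1) (erule allE)

lemma rado_sym: "rado_model R \<Longrightarrow> R x y \<Longrightarrow> R y x"
  unfolding rado_model_def by (drule conjunct2, drule conjunct1) (erule allE, erule allE, erule mp)

lemma rado_ext:
  assumes "rado_model R" "finite A" "finite B" "A \<inter> B = {}"
  obtains z where "z \<notin> A \<union> B" "\<forall>a\<in>A. R z a" "\<forall>b\<in>B. \<not> R z b"
proof -
  have "\<forall>A B. finite A \<longrightarrow> finite B \<longrightarrow> A \<inter> B = {} \<longrightarrow>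
        (\<exists>z. z \<notin> A \<union> B \<and> (\<forall>a\<in>A. R z a) \<and> (\<forall>b\<in>B. \<not> R z b))"
    using assms(1) unfolding rado_model_def by (elim conjE) assumption
  then have "\<exists>z. z \<notin> A \<union> B \<and> (\<forall>a\<in>A. R z a) \<and> (\<forall>b\<in>B. \<not> R z b)" using assms(2-4) by simp
  then show ?thesis using that by blast
qed

lemma ext_step:
  assumes rado: "rado_model R" and fin: "finite T" and iso: "isoR b R e e' T"
  shows "\<exists>v. isoR b R (case_nat u e) (case_nat v e') (insert (Var 0) (shiftT ` T))"
proof (cases "\<exists>t0\<in>T. u = tval e t0")
  case True
  then obtain t0 where t0: "t0 \<in> T" "u = tval e t0" by blast
  show ?thesis
  proof (intro exI isoR_transfer[OF iso])
    fix s assume "s \<in> insert (Var 0) (shiftT ` T)"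
    then show "\<exists>s'\<in>T. tval (case_nat u e) s = tval e s' \<and> tval (case_nat (tval e' t0) e') s = tval e' s'"
      using t0 by auto
  qed
next
  case False
  define A where "A = (\<lambda>t. tval e' t) ` {t \<in> T. b \<and> R u (tval e t)}"
  define B where "B = (\<lambda>t. tval e' t) ` {t \<in> T. \<not> (b \<and> R u (tval e t))}"
  have fA: "finite A" unfolding A_def using fin by simp
  have fB: "finite B" unfolding B_def using fin by simp
  have dAB: "A \<inter> B = {}"
  proof (rule ccontr)
    assume "A \<inter> B \<noteq> {}"
    then obtain t t' where tt: "t\<in>T" "t'\<in>T" "tval e' t = tval e' t'" "b \<and> R u (tval e t)"
        "\<not> (b \<and> R u (tval e t'))" unfolding A_def B_def by auto
    have "tval e t = tval e t'" using iso tt(1,2,3) unfolding isoR_def by blast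
    then show False using tt(4,5) by simp
  qed
  obtain v where v: "v \<notin> A \<union> B" "\<forall>a\<in>A. R v a" "\<forall>b\<in>B. \<not> R v b"
    using rado_ext[OF rado fA fB dAB] by blast
  have irr: "\<And>x. \<not> R x x" and sym: "\<And>x y. R x y \<Longrightarrow> R y x" using rado_irr[OF rado] rado_sym[OF rado] by blast+
  have k1: "\<And>t. t \<in> T \<Longrightarrow> u \<noteq> tval e t" using False by blast
  have k2: "\<And>t. t \<in> T \<Longrightarrow> v \<noteq> tval e' t"
  proof -
    fix t assume t: "t \<in> T"
    have "tval e' t \<in> A \<union> B" unfolding A_def B_def using t by blast
    then show "v \<noteq> tval e' t" using v(1) by blast
  qed
  have k3: "\<And>t. t \<in> T \<Longrightarrow> b \<Longrightarrow> R u (tval e t) = R v (tval e' t)"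
  proof -
    fix t assume t: "t \<in> T" and b: b
    show "R u (tval e t) = R v (tval e' t)"
    proof (cases "R u (tval e t)")
      case True
      then have "tval e' t \<in> A" unfolding A_def using t b by blast
      then show ?thesis using v(2) True by blast
    next
      case False
      then have "tval e' t \<in> B" unfolding B_def using t by blast
      then show ?thesis using v(3) False by blast
    qed
  qed
  have cases: "\<And>s. s \<in> insert (Var 0) (shiftT ` T) \<Longrightarrow> s = Var 0 \<or> (\<exists>s'\<in>T. s = shiftT s')" by blast
  show ?thesis
  proof (intro exI[of _ v])
    show "isoR b R (case_nat u e) (case_nat v e') (insert (Var 0) (shiftT ` T))"
      unfolding isoR_def
    proof (intro ballI)
      fix s t assume s: "s \<in> insert (Var 0) (shiftT ` T)" and t: "t \<in> insert (Var 0) (shiftT ` T)"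
      show "(b \<longrightarrow> (R (tval (case_nat u e) s) (tval (case_nat u e) t) \<longleftrightarrow> R (tval (case_nat v e') s) (tval (case_nat v e') t))) \<and>
        (tval (case_nat u e) s = tval (case_nat u e) t \<longleftrightarrow> tval (case_nat v e') s = tval (case_nat v e') t)"
      proof (cases "s = Var 0")
        case sT: True
        show ?thesis
        proof (cases "t = Var 0")
          case True then show ?thesis using sT irr by simp
        next
          case False
          then obtain t' where t': "t' \<in> T" "t = shiftT t'" using cases[OF t] by blast
          have "R u (tval e t') = R v (tval e' t')" if b using k3[OF t'(1) that] .
          then show ?thesis using sT t' k1[OF t'(1)] k2[OF t'(1)] by simp
        qed
      next
        case sF: False
        then obtain s' where s': "s' \<in> T" "s = shiftT s'" using cases[OF s] by blast
        show ?thesis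
        proof (cases "t = Var 0")
          case True
          have "R u (tval e s') = R v (tval e' s')" if b using k3[OF s'(1) that] .
          then have "R (tval e s') u = R (tval e' s') v" if b using sym that by blast
          then show ?thesis using True s' k1[OF s'(1)] k2[OF s'(1)] by auto
        next
          case False
          then obtain t' where t': "t' \<in> T" "t = shiftT t'" using cases[OF t] by blast
          have "(b \<longrightarrow> (R (tval e s') (tval e t') \<longleftrightarrow> R (tval e' s') (tval e' t'))) \<and>
            (tval e s' = tval e t' \<longleftrightarrow> tval e' s' = tval e' t')" using iso s'(1) t'(1) unfolding isoR_def by blast
          then show ?thesis using s' t' by simp
        qed
      qed
    qed
  qed
qed

lemma BF:
  assumes rado: "rado_model R"
  shows "(b \<or> norel \<phi>) \<Longrightarrow> isoR b R e e' (ts \<phi>) \<Longrightarrow> sat UNIV R e \<phi> = sat UNIV R e' \<phi>"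
proof (induction \<phi> arbitrary: e e')
  case (Rel s t)
  then have "s \<in> ts (Rel s t)" "t \<in> ts (Rel s t)" using trm_in_ts[of s] trm_in_ts[of t] by (auto simp: ts_def)
  then show ?case using Rel unfolding isoR_def by auto
next
  case (Eq s t)
  then have "s \<in> ts (Eq s t)" "t \<in> ts (Eq s t)" using trm_in_ts[of s] trm_in_ts[of t] by (auto simp: ts_def)
  then show ?case using Eq unfolding isoR_def by auto
next
  case (Neg \<phi>)
  then show ?case by (simp add: ts_def)
next
  case (Conj \<phi> \<psi>)
  have "ts \<phi> \<subseteq> ts (Conj \<phi> \<psi>)" "ts \<psi> \<subseteq> ts (Conj \<phi> \<psi>)" by (auto simp: ts_def)
  then show ?case using Conj isoR_mono by (metis norel.simps(5) sat.simps(5))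
next
  case (Ex \<psi>)
  have b: "b \<or> norel \<psi>" using Ex.prems by simp
  have dir: "\<And>e1 e2. isoR b R e1 e2 (ts (Ex \<psi>)) \<Longrightarrow> sat UNIV R e1 (Ex \<psi>) \<Longrightarrow> sat UNIV R e2 (Ex \<psi>)"
  proof -
    fix e1 e2 assume iso: "isoR b R e1 e2 (ts (Ex \<psi>))" and s: "sat UNIV R e1 (Ex \<psi>)"
    then obtain u where u: "sat UNIV R (case_nat u e1) \<psi>" by auto
    obtain v where v: "isoR b R (case_nat u e1) (case_nat v e2) (insert (Var 0) (shiftT ` ts (Ex \<psi>)))"
      using ext_step[OF rado finite_ts iso] by blast
    then have "isoR b R (case_nat u e1) (case_nat v e2) (ts \<psi>)" using isoR_mono ts_Ex by blast
    then have "sat UNIV R (case_nat v e2) \<psi>" using Ex.IH[OF b] u by blast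
    then show "sat UNIV R e2 (Ex \<psi>)" by auto
  qed
  show ?case using dir[OF Ex.prems(2)] dir[OF isoR_sym[OF Ex.prems(2)]] by blast
qed simp

definition envI :: "nat \<Rightarrow> 'u list \<Rightarrow> (nat \<Rightarrow> 'u) \<Rightarrow> nat \<Rightarrow> 'u" where
 "envI k a e i = (if k < i \<and> i - k - 1 < length a then a ! (i - k - 1) else e i)"

lemma tval_tinst: "tval e (tinst k a t) = tval (envI k a e) t"
  by (cases t) (auto simp: envI_def)

lemma envI_Suc: "envI (Suc k) a (case_nat u e) = case_nat u (envI k a e)"
  by (rule ext, case_tac x) (auto simp: envI_def)

lemma sat_inst: "sat D R e (inst k a \<phi>) = sat D R (envI k a e) \<phi>"
  by (induction \<phi> arbitrary: k e) (auto simp: tval_tinst envI_Suc)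

lemma tpar_tinst: "tpar (tinst k a t) \<subseteq> tpar t \<union> set a"
  by (cases t) auto

lemma params_inst: "params (inst k a \<phi>) \<subseteq> params \<phi> \<union> set a"
  by (induction \<phi> arbitrary: k) (use tpar_tinst in fastforce)+

definition rp :: "('u\<Rightarrow>'u\<Rightarrow>bool) \<Rightarrow> 'u set \<Rightarrow> ('u \<Rightarrow> bool) \<Rightarrow> 'u \<Rightarrow> bool" where
  "rp R S \<pi> u \<longleftrightarrow> u \<notin> S \<and> (\<forall>s\<in>S. R u s = \<pi> s)"

lemma rp_ex: assumes "rado_model R" "finite S" shows "\<exists>u. rp R S \<pi> u"
proof -
  have "finite {s\<in>S. \<pi> s}" "finite {s\<in>S. \<not> \<pi> s}" "{s\<in>S. \<pi> s} \<inter> {s\<in>S. \<not> \<pi> s} = {}" using assms(2) by auto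
  then obtain z where "z \<notin> {s\<in>S. \<pi> s} \<union> {s\<in>S. \<not> \<pi> s}" "\<forall>a\<in>{s\<in>S. \<pi> s}. R z a" "\<forall>b\<in>{s\<in>S. \<not> \<pi> s}. \<not> R z b"
    using rado_ext[OF assms(1)] by blast
  then have "rp R S \<pi> z" unfolding rp_def by blast
  then show ?thesis by blast
qed

lemma rp_mono: "rp R S' \<pi>' u \<Longrightarrow> S \<subseteq> S' \<Longrightarrow> (\<forall>s\<in>S. \<pi> s = \<pi>' s) \<Longrightarrow> rp R S \<pi> u"
  unfolding rp_def by auto

lemma ts_cases: "t \<in> ts \<phi> \<Longrightarrow> (\<exists>i. t = Var i) \<or> (\<exists>p\<in>params \<phi>. t = Par p)"
  unfolding ts_def by auto

lemma L1:
  assumes rado: "rado_model R" and P: "params \<phi> \<subseteq> S" and u: "rp R S \<pi> u" and v: "rp R S \<pi> v"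
  shows "holds R \<phi> u = holds R \<phi> v"
proof -
  have irr: "\<And>x. \<not> R x x" and sym: "\<And>x y. R x y \<Longrightarrow> R y x" using rado_irr[OF rado] rado_sym[OF rado] by blast+
  have "isoR True R (\<lambda>_. u) (\<lambda>_. v) (ts \<phi>)"
    unfolding isoR_def
  proof (intro ballI)
    fix s t assume s: "s \<in> ts \<phi>" and t: "t \<in> ts \<phi>"
    have h1: "\<And>p. p \<in> S \<Longrightarrow> R u p = R v p \<and> u \<noteq> p \<and> v \<noteq> p" using u v unfolding rp_def by auto
    have h2: "\<And>p. p \<in> S \<Longrightarrow> R p u = R p v" using h1 sym by blast
    then show "(True \<longrightarrow> (R (tval (\<lambda>_. u) s) (tval (\<lambda>_. u) t) \<longleftrightarrow> R (tval (\<lambda>_. v) s) (tval (\<lambda>_. v) t))) \<and>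
      (tval (\<lambda>_. u) s = tval (\<lambda>_. u) t \<longleftrightarrow> tval (\<lambda>_. v) s = tval (\<lambda>_. v) t)"
      using ts_cases[OF s] ts_cases[OF t] P irr h1 h2 by fastforce
  qed
  then show ?thesis unfolding holds_def using BF[OF rado] by blast
qed

definition Tv :: "('u\<Rightarrow>'u\<Rightarrow>bool) \<Rightarrow> 'u set \<Rightarrow> 'u fm \<Rightarrow> ('u \<Rightarrow> bool) \<Rightarrow> bool" where
  "Tv R S \<phi> \<pi> = holds R \<phi> (SOME u. rp R S \<pi> u)"

lemma Tv_eq:
  assumes rado: "rado_model R" and fin: "finite S" and P: "params \<phi> \<subseteq> S" and u: "rp R S' \<pi>' u"
    and sub: "S \<subseteq> S'" and ag: "\<forall>s\<in>S. \<pi> s = \<pi>' s"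
  shows "Tv R S \<phi> \<pi> = holds R \<phi> u"
proof -
  have "rp R S \<pi> (SOME u. rp R S \<pi> u)" using rp_ex[OF rado fin] by (rule someI_ex)
  moreover have "rp R S \<pi> u" using rp_mono[OF u sub ag] .
  ultimately show ?thesis unfolding Tv_def using L1[OF rado P] by blast
qed

lemma norel_dich:
  assumes rado: "rado_model R" and E: "norel E" and u: "u \<notin> params E" and v: "v \<notin> params E"
  shows "holds R E u = holds R E v"
proof -
  have "isoR False R (\<lambda>_. u) (\<lambda>_. v) (ts E)"
    unfolding isoR_def
  proof (intro ballI)
    fix s t assume s: "s \<in> ts E" and t: "t \<in> ts E"
    show "(False \<longrightarrow> (R (tval (\<lambda>_. u) s) (tval (\<lambda>_. u) t) \<longleftrightarrow> R (tval (\<lambda>_. v) s) (tval (\<lambda>_. v) t))) \<and>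
      (tval (\<lambda>_. u) s = tval (\<lambda>_. u) t \<longleftrightarrow> tval (\<lambda>_. v) s = tval (\<lambda>_. v) t)"
      using ts_cases[OF s] ts_cases[OF t] u v by auto
  qed
  then show ?thesis unfolding holds_def using BF[OF rado] E by blast
qed

lemma rado_infinite: fixes R :: "'u \<Rightarrow> 'u \<Rightarrow> bool" assumes "rado_model R" shows "infinite (UNIV :: 'u set)"
proof
  assume fin: "finite (UNIV :: 'u set)"
  obtain z :: 'u where "z \<notin> {} \<union> UNIV" by (rule rado_ext[OF assms finite.emptyI fin]) auto
  then show False by simp
qed

definition wt :: "('u \<Rightarrow> real) \<Rightarrow> 'u set \<Rightarrow> ('u \<Rightarrow> bool) \<Rightarrow> real" where
 "wt f S \<pi> = (\<Prod>s\<in>S. if \<pi> s then f s else 1 - f s)"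

definition nu :: "('u \<Rightarrow> real) \<Rightarrow> 'u set \<Rightarrow> (('u \<Rightarrow> bool) \<Rightarrow> bool) \<Rightarrow> real" where
 "nu f S G = (\<Sum>\<pi>\<in>PiE S (\<lambda>_. UNIV). if G \<pi> then wt f S \<pi> else 0)"

lemma nu_cong: "(\<And>\<pi>. \<pi> \<in> PiE S (\<lambda>_. UNIV) \<Longrightarrow> G1 \<pi> = G2 \<pi>) \<Longrightarrow> nu f S G1 = nu f S G2"
  unfolding nu_def by (rule sum.cong) auto

lemma marg1:
  assumes x: "x \<notin> S0" and fin: "finite S0"
  shows "nu f (insert x S0) (\<lambda>\<pi>. H (restrict \<pi> S0)) = nu f S0 H"
proof -
  let ?h = "\<lambda>(y::bool, g). g(x := y)"
  define gg where "gg = (\<lambda>\<pi>. if H (restrict \<pi> S0) then wt f (insert x S0) \<pi> else 0)"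
  have "nu f (insert x S0) (\<lambda>\<pi>. H (restrict \<pi> S0)) = sum gg (?h ` (UNIV \<times> PiE S0 (\<lambda>_. UNIV)))"
    unfolding nu_def PiE_insert_eq gg_def by simp
  also have "\<dots> = sum (gg \<circ> ?h) (UNIV \<times> PiE S0 (\<lambda>_. UNIV))"
    by (rule sum.reindex) (rule inj_combinator[OF x])
  also have "\<dots> = (\<Sum>yg\<in>UNIV \<times> PiE S0 (\<lambda>_. UNIV). (\<lambda>\<pi>. if H (restrict \<pi> S0) then wt f (insert x S0) \<pi> else 0) (?h yg))"
    unfolding gg_def o_def by simp
  also have "\<dots> = (\<Sum>yg\<in>UNIV \<times> PiE S0 (\<lambda>_. UNIV).
      (if fst yg then f x else 1 - f x) * (if H (snd yg) then wt f S0 (snd yg) else 0))"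
  proof (rule sum.cong[OF refl])
    fix yg assume yg: "yg \<in> (UNIV::bool set) \<times> PiE S0 (\<lambda>_. (UNIV::bool set))"
    obtain y g where ygd: "yg = (y, g)" by (cases yg)
    with yg have g: "g \<in> PiE S0 (\<lambda>_. UNIV)" by auto
    have r: "restrict (g(x := y)) S0 = g"
      using g x by (auto simp: restrict_def PiE_def extensional_def fun_eq_iff)
    have w: "wt f (insert x S0) (g(x := y)) = (if y then f x else 1 - f x) * wt f S0 g"
    proof -
      have "(\<Prod>s\<in>S0. if (g(x := y)) s then f s else 1 - f s) = (\<Prod>s\<in>S0. if g s then f s else 1 - f s)"
        by (rule prod.cong) (use x in auto)
      note eq = this
      show ?thesis unfolding wt_def prod.insert[OF fin x] fun_upd_same eq by (rule refl)
    qed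
    show "(\<lambda>\<pi>. if H (restrict \<pi> S0) then wt f (insert x S0) \<pi> else 0) (?h yg) =
      (if fst yg then f x else 1 - f x) * (if H (snd yg) then wt f S0 (snd yg) else 0)"
      using r w ygd by simp
  qed
  also have "\<dots> = (\<Sum>y\<in>(UNIV::bool set). \<Sum>g\<in>PiE S0 (\<lambda>_. UNIV).
      (if y then f x else 1 - f x) * (if H g then wt f S0 g else 0))"
    by (subst sum.cartesian_product) (auto intro!: sum.cong)
  also have "\<dots> = (\<Sum>y\<in>(UNIV::bool set). (if y then f x else 1 - f x)) * nu f S0 H"
    unfolding nu_def UNIV_bool by (simp add: sum_distrib_left[symmetric] algebra_simps)
  also have "\<dots> = nu f S0 H" by (simp add: UNIV_bool)
  finally show ?thesis .
qed

lemma marg_aux: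
  assumes "finite D" shows "D \<inter> S = {} \<Longrightarrow> finite S \<Longrightarrow> nu f (S \<union> D) (\<lambda>\<pi>. G (restrict \<pi> S)) = nu f S G"
  using assms
proof (induction D rule: finite_induct)
  case empty
  have "nu f S (\<lambda>\<pi>. G (restrict \<pi> S)) = nu f S G" by (rule nu_cong) (metis PiE_restrict)
  then show ?case by (simp only: Un_empty_right)
next
  case (insert x D)
  have disj: "D \<inter> S = {}" using insert.prems by auto
  have "nu f (S \<union> insert x D) (\<lambda>\<pi>. G (restrict \<pi> S)) =
        nu f (insert x (S \<union> D)) (\<lambda>\<pi>. (\<lambda>\<rho>. G (restrict \<rho> S)) (restrict \<pi> (S \<union> D)))"
    by (simp add: restrict_restrict Int_absorb2)
  also have "\<dots> = nu f (S \<union> D) (\<lambda>\<rho>. G (restrict \<rho> S))"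
    using insert by (intro marg1) auto
  also have "\<dots> = nu f S G" using insert.IH[OF disj insert.prems(2)] .
  finally show ?case .
qed

lemma marg:
  assumes "finite S'" "S \<subseteq> S'"
  shows "nu f S' (\<lambda>\<pi>. G (restrict \<pi> S)) = nu f S G"
proof -
  have "S' = S \<union> (S' - S)" using assms by auto
  then show ?thesis using marg_aux[of "S' - S" S f G] assms
    by (metis Diff_disjoint finite_Diff finite_subset inf_commute)
qed

lemma nu_empty: "nu f {} G = (if G (\<lambda>_. undefined) then 1 else 0)"
  unfolding nu_def wt_def by simp

lemma nu_true: assumes "finite S" shows "nu f S (\<lambda>_. True) = 1"
  using marg[OF assms, of "{}" f "\<lambda>_. True"] by (simp add: nu_empty)

lemma nu_disj:
  assumes "\<And>\<pi>. \<pi> \<in> PiE S (\<lambda>_. UNIV) \<Longrightarrow> \<not> (G1 \<pi> \<and> G2 \<pi>)"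
  shows "nu f S (\<lambda>\<pi>. G1 \<pi> \<or> G2 \<pi>) = nu f S G1 + nu f S G2"
  unfolding nu_def sum.distrib[symmetric] using assms by (intro sum.cong) auto

lemma wt_nonneg: "(\<And>s. s \<in> S \<Longrightarrow> 0 \<le> f s \<and> f s \<le> 1) \<Longrightarrow> 0 \<le> wt f S \<pi>"
  unfolding wt_def by (intro prod_nonneg) auto

lemma nu_nonneg: "(\<And>s. s \<in> S \<Longrightarrow> 0 \<le> f s \<and> f s \<le> 1) \<Longrightarrow> 0 \<le> nu f S G"
  unfolding nu_def by (intro sum_nonneg) (auto intro: wt_nonneg)

lemma nu_le1: assumes "finite S" "\<And>s. s \<in> S \<Longrightarrow> 0 \<le> f s \<and> f s \<le> 1" shows "nu f S G \<le> 1"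
proof -
  have "nu f S G \<le> nu f S (\<lambda>_. True)" unfolding nu_def
    using wt_nonneg[OF assms(2)] by (intro sum_mono) auto
  then show ?thesis using nu_true[OF assms(1)] by simp
qed

lemma nu_single:
  assumes fin: "finite K"
  shows "nu f K (\<lambda>\<pi>. \<forall>s\<in>K. \<pi> s = \<pi>0 s) = wt f K \<pi>0"
proof -
  have "nu f K (\<lambda>\<pi>. \<forall>s\<in>K. \<pi> s = \<pi>0 s) = (\<Sum>\<pi>\<in>PiE K (\<lambda>_. UNIV). if \<pi> = restrict \<pi>0 K then wt f K \<pi> else 0)"
    unfolding nu_def
    by (intro sum.cong refl) (auto simp: PiE_def extensional_def restrict_def fun_eq_iff)
  also have "\<dots> = wt f K (restrict \<pi>0 K)"
    using fin by (simp add: sum.delta finite_PiE)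
  also have "\<dots> = wt f K \<pi>0" unfolding wt_def by (rule prod.cong) auto
  finally show ?thesis .
qed

definition qf :: "('u\<Rightarrow>'u\<Rightarrow>bool) \<Rightarrow> 'u set \<Rightarrow> (real\<Rightarrow>real\<Rightarrow>real) \<Rightarrow> (('u\<Rightarrow>bool)\<Rightarrow>real) \<Rightarrow> ('u\<Rightarrow>bool) \<Rightarrow> 'u \<Rightarrow> real" where
 "qf R M W F p s = (if s \<in> M then (if p s then 1 else 0) else W (F p) (F (tpM R M s)))"

lemma space_lam: "space (lam M) = PiE M (\<lambda>_. UNIV)"
  unfolding lam_def by (simp add: space_PiM)

lemma prob_lam: "prob_space (lam M)"
  unfolding lam_def by (intro prob_space_PiM prob_space_measure_pmf)

lemma tpM_space: "tpM R M s \<in> space (lam M)"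
  unfolding space_lam tpM_def by simp

lemma F_meas:
  assumes "F \<in> L \<rightarrow>\<^sub>M unit_interval"
  shows "F \<in> borel_measurable L" "\<And>p. p \<in> space L \<Longrightarrow> F p \<in> {0..1}"
proof -
  have *: "F \<in> L \<rightarrow>\<^sub>M lborel" "F \<in> space L \<rightarrow> {0..1}"
    using assms unfolding unit_interval_def measurable_restrict_space2_iff by auto
  have "measurable L lborel = measurable L borel" by (rule measurable_cong_sets) simp_all
  then show "F \<in> borel_measurable L" using * by simp
  show "\<And>p. p \<in> space L \<Longrightarrow> F p \<in> {0..1}" using * by auto
qed

lemma W_meas:
  assumes bg: "borel_graphon W" and Fm: "F \<in> L \<rightarrow>\<^sub>M unit_interval" and c: "c \<in> {0..1}"
  shows "(\<lambda>p. W (F p) c) \<in> borel_measurable L"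
proof -
  have "(\<lambda>p. (F p, c)) \<in> L \<rightarrow>\<^sub>M (borel \<Otimes>\<^sub>M borel)"
    using F_meas(1)[OF Fm] by (intro measurable_Pair) auto
  then have "(\<lambda>p. (F p, c)) \<in> L \<rightarrow>\<^sub>M borel" by (simp add: borel_prod)
  moreover have "(\<lambda>p. (F p, c)) \<in> space L \<rightarrow> {0..1} \<times> {0..1}" using F_meas(2)[OF Fm] c by auto
  ultimately have "(\<lambda>p. (F p, c)) \<in> L \<rightarrow>\<^sub>M restrict_space borel ({0..1} \<times> {0..1})"
    by (simp add: measurable_restrict_space2_iff)
  moreover have "case_prod W \<in> borel_measurable (restrict_space borel ({0..1} \<times> {0..1}))"
    using bg unfolding borel_graphon_def by blast
  ultimately have "case_prod W \<circ> (\<lambda>p. (F p, c)) \<in> borel_measurable L"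
    by (rule measurable_comp)
  then show ?thesis by (simp add: o_def)
qed

lemma qf_meas:
  assumes bg: "borel_graphon W" and Fm: "F \<in> lam M \<rightarrow>\<^sub>M unit_interval"
  shows "(\<lambda>p. qf R M W F p s) \<in> borel_measurable (lam M)"
proof (cases "s \<in> M")
  case True
  have "(\<lambda>p. p s) \<in> lam M \<rightarrow>\<^sub>M measure_pmf (bernoulli_pmf (1/2))"
    unfolding lam_def using True by (rule measurable_component_singleton)
  moreover have "(\<lambda>b::bool. if b then 1 else 0 :: real) \<in> measure_pmf (bernoulli_pmf (1/2)) \<rightarrow>\<^sub>M borel"
    by simp
  ultimately have "(\<lambda>b::bool. if b then 1 else 0 :: real) \<circ> (\<lambda>p. p s) \<in> borel_measurable (lam M)"
    by (rule measurable_comp)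
  then show ?thesis using True unfolding qf_def by (simp add: o_def)
next
  case False
  have "F (tpM R M s) \<in> {0..1}" using F_meas(2)[OF Fm tpM_space] .
  then show ?thesis using False W_meas[OF bg Fm] unfolding qf_def by simp
qed

lemma qf_bounds:
  assumes bg: "borel_graphon W" and Fm: "F \<in> lam M \<rightarrow>\<^sub>M unit_interval" and p: "p \<in> space (lam M)"
  shows "0 \<le> qf R M W F p s \<and> qf R M W F p s \<le> 1"
proof -
  have "F p \<in> {0..1}" "F (tpM R M s) \<in> {0..1}" using F_meas(2)[OF Fm p] F_meas(2)[OF Fm tpM_space] by auto
  then show ?thesis using bg unfolding qf_def borel_graphon_def by auto
qed

lemma nu_meas:
  assumes bg: "borel_graphon W" and Fm: "F \<in> lam M \<rightarrow>\<^sub>M unit_interval"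
  shows "(\<lambda>p. nu (qf R M W F p) S G) \<in> borel_measurable (lam M)"
proof -
  note [measurable] = qf_meas[OF bg Fm]
  have "\<And>\<pi> s. (\<lambda>p. if \<pi> s then qf R M W F p s else 1 - qf R M W F p s) \<in> borel_measurable (lam M)"
    by (case_tac "\<pi> s") auto
  then have "\<And>\<pi>. (\<lambda>p. wt (qf R M W F p) S \<pi>) \<in> borel_measurable (lam M)"
    unfolding wt_def by (intro borel_measurable_prod) auto
  then have "\<And>\<pi>. (\<lambda>p. if G \<pi> then wt (qf R M W F p) S \<pi> else 0) \<in> borel_measurable (lam M)"
    by (case_tac "G \<pi>") auto
  then show ?thesis unfolding nu_def by (intro borel_measurable_sum) auto
qed

lemma nu_integrable:
  assumes bg: "borel_graphon W" and Fm: "F \<in> lam M \<rightarrow>\<^sub>M unit_interval" and fin: "finite S"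
  shows "integrable (lam M) (\<lambda>p. nu (qf R M W F p) S G)"
proof -
  interpret prob_space "lam M" by (rule prob_lam)
  show ?thesis
  proof (rule integrable_const_bound[where B=1])
    show "AE p in lam M. norm (nu (qf R M W F p) S G) \<le> 1"
    proof (rule AE_I2)
      fix p assume p: "p \<in> space (lam M)"
      have b: "\<And>s. s \<in> S \<Longrightarrow> 0 \<le> qf R M W F p s \<and> qf R M W F p s \<le> 1" using qf_bounds[OF bg Fm p] by blast
      show "norm (nu (qf R M W F p) S G) \<le> 1" using nu_nonneg[where f="qf R M W F p" and S=S and G=G, OF b] nu_le1[where f="qf R M W F p" and S=S and G=G, OF fin b] by simp
    qed
    show "(\<lambda>p. nu (qf R M W F p) S G) \<in> borel_measurable (lam M)" by (rule nu_meas[OF bg Fm])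
  qed
qed

definition muD :: "('u\<Rightarrow>'u\<Rightarrow>bool) \<Rightarrow> 'u set \<Rightarrow> (real\<Rightarrow>real\<Rightarrow>real) \<Rightarrow> (('u\<Rightarrow>bool)\<Rightarrow>real) \<Rightarrow> 'u fm \<Rightarrow> real" where
  "muD R M W F \<phi> = (LINT p|lam M. nu (qf R M W F p) (params \<phi>) (Tv R (params \<phi>) \<phi>))"

lemma nuTv:
  assumes rado: "rado_model R" and fin: "finite S" and P: "params \<phi> \<subseteq> S"
  shows "nu f S (Tv R S \<phi>) = nu f (params \<phi>) (Tv R (params \<phi>) \<phi>)"
proof -
  have "nu f S (Tv R S \<phi>) = nu f S (\<lambda>\<pi>. Tv R (params \<phi>) \<phi> (restrict \<pi> (params \<phi>)))"
  proof (rule nu_cong)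
    fix \<pi> :: "'a \<Rightarrow> bool"
    obtain u where u: "rp R S \<pi> u" using rp_ex[OF rado fin] by blast
    have "Tv R S \<phi> \<pi> = holds R \<phi> u" using Tv_eq[OF rado fin P u order_refl] by simp
    moreover have "Tv R (params \<phi>) \<phi> (restrict \<pi> (params \<phi>)) = holds R \<phi> u"
      using Tv_eq[OF rado finite_params order_refl u P] by simp
    ultimately show "Tv R S \<phi> \<pi> = Tv R (params \<phi>) \<phi> (restrict \<pi> (params \<phi>))" by simp
  qed
  also have "\<dots> = nu f (params \<phi>) (Tv R (params \<phi>) \<phi>)" by (rule marg[OF fin P])
  finally show ?thesis .
qed

lemma nu_equiv:
  assumes rado: "rado_model R" and eq: "\<forall>u. holds R \<phi> u = holds R \<psi> u"
  shows "nu f (params \<phi>) (Tv R (params \<phi>) \<phi>) = nu f (params \<psi>) (Tv R (params \<psi>) \<psi>)"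
proof -
  define S where "S = params \<phi> \<union> params \<psi>"
  have fin: "finite S" unfolding S_def by (simp add: finite_params)
  have P1: "params \<phi> \<subseteq> S" and P2: "params \<psi> \<subseteq> S" unfolding S_def by auto
  have "nu f S (Tv R S \<phi>) = nu f S (Tv R S \<psi>)"
  proof (rule nu_cong)
    fix \<pi> :: "'a \<Rightarrow> bool"
    obtain u where u: "rp R S \<pi> u" using rp_ex[OF rado fin] by blast
    have "Tv R S \<phi> \<pi> = holds R \<phi> u" using Tv_eq[OF rado fin P1 u order_refl] by simp
    moreover have "Tv R S \<psi> \<pi> = holds R \<psi> u" using Tv_eq[OF rado fin P2 u order_refl] by simp
    ultimately show "Tv R S \<phi> \<pi> = Tv R S \<psi> \<pi>" using eq by simp
  qed
  then show ?thesis using nuTv[OF rado fin P1] nuTv[OF rado fin P2] by simp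
qed

lemma holds_Disj: "holds R (Disj \<phi> \<psi>) u = (holds R \<phi> u \<or> holds R \<psi> u)"
  by (simp add: holds_def Disj_def)

lemma nu_Disj:
  assumes rado: "rado_model R" and dis: "\<forall>u. \<not> (holds R \<phi> u \<and> holds R \<psi> u)"
  shows "nu f (params (Disj \<phi> \<psi>)) (Tv R (params (Disj \<phi> \<psi>)) (Disj \<phi> \<psi>)) =
     nu f (params \<phi>) (Tv R (params \<phi>) \<phi>) + nu f (params \<psi>) (Tv R (params \<psi>) \<psi>)"
proof -
  define S where "S = params \<phi> \<union> params \<psi>"
  have SD: "params (Disj \<phi> \<psi>) = S" unfolding S_def by (simp add: Disj_def)
  have fin: "finite S" unfolding S_def by (simp add: finite_params)
  have P1: "params \<phi> \<subseteq> S" and P2: "params \<psi> \<subseteq> S" unfolding S_def by auto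
  have P3: "params (Disj \<phi> \<psi>) \<subseteq> S" using SD by simp
  have "nu f S (Tv R S (Disj \<phi> \<psi>)) = nu f S (\<lambda>\<pi>. Tv R S \<phi> \<pi> \<or> Tv R S \<psi> \<pi>)"
  proof (rule nu_cong)
    fix \<pi> :: "'a \<Rightarrow> bool"
    obtain u where u: "rp R S \<pi> u" using rp_ex[OF rado fin] by blast
    have "Tv R S \<phi> \<pi> = holds R \<phi> u" using Tv_eq[OF rado fin P1 u order_refl] by simp
    moreover have "Tv R S \<psi> \<pi> = holds R \<psi> u" using Tv_eq[OF rado fin P2 u order_refl] by simp
    moreover have "Tv R S (Disj \<phi> \<psi>) \<pi> = holds R (Disj \<phi> \<psi>) u" using Tv_eq[OF rado fin P3 u order_refl] by simp
    ultimately show "Tv R S (Disj \<phi> \<psi>) \<pi> = (Tv R S \<phi> \<pi> \<or> Tv R S \<psi> \<pi>)" by (simp add: holds_Disj)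
  qed
  also have "\<dots> = nu f S (Tv R S \<phi>) + nu f S (Tv R S \<psi>)"
  proof (rule nu_disj)
    fix \<pi> :: "'a \<Rightarrow> bool"
    obtain u where u: "rp R S \<pi> u" using rp_ex[OF rado fin] by blast
    have "Tv R S \<phi> \<pi> = holds R \<phi> u" using Tv_eq[OF rado fin P1 u order_refl] by simp
    moreover have "Tv R S \<psi> \<pi> = holds R \<psi> u" using Tv_eq[OF rado fin P2 u order_refl] by simp
    ultimately show "\<not> (Tv R S \<phi> \<pi> \<and> Tv R S \<psi> \<pi>)" using dis by simp
  qed
  finally show ?thesis using SD nuTv[OF rado fin P1] nuTv[OF rado fin P2] by simp
qed

lemma nu_false: "nu f S (\<lambda>_. False) = 0" unfolding nu_def by simp

lemma nu_Eq:
  assumes rado: "rado_model R"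
  shows "nu f (params (Eq (Var 0) (Par a))) (Tv R (params (Eq (Var 0) (Par a))) (Eq (Var 0) (Par a))) = 0"
proof -
  have "nu f {a} (Tv R {a} (Eq (Var 0) (Par a))) = nu f {a} (\<lambda>_. False)"
  proof (rule nu_cong)
    fix \<pi> :: "'a \<Rightarrow> bool"
    obtain u where u: "rp R {a} \<pi> u" using rp_ex[OF rado] by blast
    have "Tv R {a} (Eq (Var 0) (Par a)) \<pi> = holds R (Eq (Var 0) (Par a)) u"
      using Tv_eq[OF rado _ _ u order_refl] by simp
    then show "Tv R {a} (Eq (Var 0) (Par a)) \<pi> = False" using u by (simp add: holds_def rp_def)
  qed
  then show ?thesis by (simp add: nu_false)
qed

lemma nu_TT: "nu f (params TT) (Tv R (params TT) TT) = 1"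
  by (simp add: TT_def nu_empty Tv_def holds_def)

lemma triv_false:
  assumes rado: "rado_model R" and E: "norel E" and tr: "trivial_E R E" and u: "u \<notin> params E"
  shows "\<not> holds R E u"
proof
  assume h: "holds R E u"
  have "\<forall>v. v \<notin> params E \<longrightarrow> holds R E v" using norel_dich[OF rado E u] h by blast
  obtain T0 where T0: "finite T0" "\<forall>v. holds R E v \<longrightarrow> v \<in> T0" using tr unfolding trivial_E_def by blast
  have "UNIV \<subseteq> T0 \<union> params E" using T0 \<open>\<forall>v. v \<notin> params E \<longrightarrow> holds R E v\<close> by blast
  then have "finite (UNIV :: 'a set)" using T0(1) finite_params finite_subset by blast
  then show False using rado_infinite[OF rado] by simp
qed

lemma nontriv_true:
  assumes rado: "rado_model R" and E: "norel E" and tr: "\<not> trivial_E R E" and u: "u \<notin> params E"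
  shows "holds R E u"
proof (rule ccontr)
  assume h: "\<not> holds R E u"
  have "\<forall>v. holds R E v \<longrightarrow> v \<in> params E" using norel_dich[OF rado E u] h by blast
  then have "trivial_E R E" unfolding trivial_E_def using finite_params by blast
  then show False using tr by simp
qed

lemma sat_conjR: "sat D R e (conjR xs) = (\<forall>a\<in>set xs. R (e 0) a)"
  by (induction xs) (auto simp: conjR_def TT_def)

lemma sat_conjNR: "sat D R e (conjNR xs) = (\<forall>a\<in>set xs. \<not> R (e 0) a)"
  by (induction xs) (auto simp: conjNR_def TT_def)

lemma params_conjR: "params (conjR xs) = set xs"
  by (induction xs) (auto simp: conjR_def TT_def)

lemma params_conjNR: "params (conjNR xs) = set xs"
  by (induction xs) (auto simp: conjNR_def TT_def)

lemma holds_basic: "holds R (basic_fm as bs cs ds E) u =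
  ((\<forall>a\<in>set as. R u a) \<and> (\<forall>b\<in>set bs. \<not> R u b) \<and> (\<forall>c\<in>set cs. R u c) \<and> (\<forall>d\<in>set ds. \<not> R u d) \<and> holds R E u)"
  by (simp add: holds_def basic_fm_def sat_conjR sat_conjNR)

lemma params_basic: "params (basic_fm as bs cs ds E) = (set as \<union> set bs \<union> set cs \<union> set ds) \<union> params E"
  by (auto simp: basic_fm_def params_conjR params_conjNR)

lemma prod_ind: "finite A \<Longrightarrow> (\<Prod>a\<in>A. if P a then 1 else 0 :: real) = (if \<forall>a\<in>A. P a then 1 else 0)"
  by (induction A rule: finite_induct) auto

lemma nu_basic:
  assumes rado: "rado_model R" and ib: "is_basic M as bs cs ds E"
  shows "nu (qf R M W F p) (params (basic_fm as bs cs ds E)) (Tv R (params (basic_fm as bs cs ds E)) (basic_fm as bs cs ds E)) =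
    (if trivial_E R E then 0 else
         indicator {q. (\<forall>a\<in>set as. q a) \<and> (\<forall>b\<in>set bs. \<not> q b)} p
         * (\<Prod>c\<in>set cs. W (F p) (F (tpM R M c)))
         * (\<Prod>d\<in>set ds. 1 - W (F p) (F (tpM R M d))))"
proof -
  let ?\<phi> = "basic_fm as bs cs ds E"
  define S where "S = params ?\<phi>"
  define K where "K = set as \<union> set bs \<union> set cs \<union> set ds"
  define f where "f = qf R M W F p"
  have fin: "finite S" unfolding S_def by (rule finite_params)
  have finK: "finite K" unfolding K_def by simp
  have SK: "S = K \<union> params E" unfolding S_def K_def by (rule params_basic)
  have E: "norel E" using ib unfolding is_basic_def by blast
  have dis: "set as \<subseteq> M" "set bs \<subseteq> M" "set as \<inter> set bs = {}" "set cs \<inter> M = {}" "set ds \<inter> M = {}"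
    "set cs \<inter> set ds = {}" using ib unfolding is_basic_def by blast+
  have dis2: "set as \<inter> set cs = {}" "set as \<inter> set ds = {}" "set bs \<inter> set cs = {}" "set bs \<inter> set ds = {}"
    using dis by blast+
  show ?thesis
  proof (cases "trivial_E R E")
    case True
    have "nu f S (Tv R S ?\<phi>) = nu f S (\<lambda>_. False)"
    proof (rule nu_cong)
      fix \<pi> :: "'a \<Rightarrow> bool"
      obtain u where u: "rp R S \<pi> u" using rp_ex[OF rado fin] by blast
      have "Tv R S ?\<phi> \<pi> = holds R ?\<phi> u" using Tv_eq[OF rado fin _ u order_refl] S_def by simp
      moreover have "u \<notin> params E" using u SK unfolding rp_def by blast
      ultimately show "Tv R S ?\<phi> \<pi> = False" using triv_false[OF rado E True] holds_basic by metis
    qed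
    then show ?thesis using True by (simp add: S_def f_def nu_false)
  next
    case False
    define G0 where "G0 = (\<lambda>\<rho>::'a \<Rightarrow> bool. (\<forall>a\<in>set as. \<rho> a) \<and> (\<forall>b\<in>set bs. \<not> \<rho> b) \<and> (\<forall>c\<in>set cs. \<rho> c) \<and> (\<forall>d\<in>set ds. \<not> \<rho> d))"
    define \<pi>0 where "\<pi>0 = (\<lambda>s. s \<in> set as \<or> s \<in> set cs)"
    have "nu f S (Tv R S ?\<phi>) = nu f S (\<lambda>\<pi>. G0 (restrict \<pi> K))"
    proof (rule nu_cong)
      fix \<pi> :: "'a \<Rightarrow> bool"
      obtain u where u: "rp R S \<pi> u" using rp_ex[OF rado fin] by blast
      have "Tv R S ?\<phi> \<pi> = holds R ?\<phi> u" using Tv_eq[OF rado fin _ u order_refl] S_def by simp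
      moreover have "u \<notin> params E" using u SK unfolding rp_def by blast
      then have "holds R E u" by (rule nontriv_true[OF rado E False])
      moreover have "\<And>s. s \<in> K \<Longrightarrow> R u s = \<pi> s" using u SK unfolding rp_def by blast
      ultimately show "Tv R S ?\<phi> \<pi> = G0 (restrict \<pi> K)"
        unfolding G0_def holds_basic K_def by auto
    qed
    also have "\<dots> = nu f K G0" by (rule marg[OF fin]) (simp add: SK)
    also have "\<dots> = nu f K (\<lambda>\<rho>. \<forall>s\<in>K. \<rho> s = \<pi>0 s)"
      by (rule nu_cong) (use dis dis2 in \<open>auto simp: G0_def \<pi>0_def K_def disjoint_iff subset_iff\<close>)
    also have "\<dots> = wt f K \<pi>0" by (rule nu_single[OF finK])
    also have "\<dots> = (\<Prod>a\<in>set as. if p a then 1 else 0) * (\<Prod>b\<in>set bs. if \<not> p b then 1 else 0)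
         * (\<Prod>c\<in>set cs. W (F p) (F (tpM R M c)))
         * (\<Prod>d\<in>set ds. 1 - W (F p) (F (tpM R M d)))"
    proof -
      let ?g = "\<lambda>s. if \<pi>0 s then f s else 1 - f s"
      have d1: "(set as \<union> set bs) \<inter> set cs = {}" "(set as \<union> set bs \<union> set cs) \<inter> set ds = {}"
        using dis by auto
      have "wt f K \<pi>0 = prod ?g (set as) * prod ?g (set bs) * prod ?g (set cs) * prod ?g (set ds)"
        unfolding wt_def K_def
        by (simp add: prod.union_disjoint d1 dis(3))
      moreover have "prod ?g (set as) = (\<Prod>a\<in>set as. if p a then 1 else 0)"
        by (rule prod.cong) (use dis in \<open>auto simp: \<pi>0_def f_def qf_def\<close>)
      moreover have "prod ?g (set bs) = (\<Prod>b\<in>set bs. if \<not> p b then 1 else 0)"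
        by (rule prod.cong) (use dis in \<open>auto simp: \<pi>0_def f_def qf_def\<close>)
      moreover have "prod ?g (set cs) = (\<Prod>c\<in>set cs. W (F p) (F (tpM R M c)))"
        by (rule prod.cong) (use dis in \<open>auto simp: \<pi>0_def f_def qf_def\<close>)
      moreover have "prod ?g (set ds) = (\<Prod>d\<in>set ds. 1 - W (F p) (F (tpM R M d)))"
        by (rule prod.cong) (use dis in \<open>auto simp: \<pi>0_def f_def qf_def\<close>)
      ultimately show ?thesis by simp
    qed
    also have "\<dots> = indicator {q. (\<forall>a\<in>set as. q a) \<and> (\<forall>b\<in>set bs. \<not> q b)} p
         * (\<Prod>c\<in>set cs. W (F p) (F (tpM R M c)))
         * (\<Prod>d\<in>set ds. 1 - W (F p) (F (tpM R M d)))"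
      by (simp add: prod_ind indicator_def)
    finally show ?thesis using False by (simp add: S_def f_def)
  qed
qed

lemma stp:
  assumes st: "same_type_over R M a b" and k: "k < length a" and l: "l < length a"
  shows "R (a!k) (a!l) = R (b!k) (b!l)" "(a!k = a!l) = (b!k = b!l)"
proof -
  have H: "\<And>\<psi>. params \<psi> \<subseteq> M \<Longrightarrow> fv \<psi> \<subseteq> {..<length a} \<Longrightarrow> sat UNIV R (nth a) \<psi> = sat UNIV R (nth b) \<psi>"
    using st unfolding same_type_over_def by blast
  show "R (a!k) (a!l) = R (b!k) (b!l)" using H[of "Rel (Var k) (Var l)"] k l by simp
  show "(a!k = a!l) = (b!k = b!l)" using H[of "Eq (Var k) (Var l)"] k l by simp
qed

lemma stpM:
  assumes st: "same_type_over R M a b" and k: "k < length a" and m: "m \<in> M"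
  shows "(a!k = m) = (b!k = m)" "R (a!k) m = R (b!k) m"
proof -
  have H: "\<And>\<psi>. params \<psi> \<subseteq> M \<Longrightarrow> fv \<psi> \<subseteq> {..<length a} \<Longrightarrow> sat UNIV R (nth a) \<psi> = sat UNIV R (nth b) \<psi>"
    using st unfolding same_type_over_def by blast
  show "(a!k = m) = (b!k = m)" using H[of "Eq (Var k) (Par m)"] k m by simp
  show "R (a!k) m = R (b!k) m" using H[of "Rel (Var k) (Par m)"] k m by simp
qed

lemma qf_st:
  assumes st: "same_type_over R M a b" and k: "k < length a"
  shows "qf R M W F p (a!k) = qf R M W F p (b!k)"
proof (cases "a!k \<in> M")
  case True
  then have "b!k = a!k" using stpM(1)[OF st k True] by simp
  then show ?thesis by simp
next
  case False
  have bM: "b!k \<notin> M"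
  proof
    assume "b!k \<in> M"
    then have "a!k = b!k" using stpM(1)[OF st k] by blast
    then show False using False \<open>b!k \<in> M\<close> by simp
  qed
  have "tpM R M (a!k) = tpM R M (b!k)" unfolding tpM_def using stpM(2)[OF st k]
    by (intro ext) (simp add: restrict_def)
  then show ?thesis using False bM unfolding qf_def by simp
qed

lemma nu_reindex:
  assumes bij: "bij_betw h A B" and finA: "finite A"
    and fq: "\<And>x. x \<in> A \<Longrightarrow> fB (h x) = fA x"
    and G: "\<And>\<rho>. \<rho> \<in> PiE A (\<lambda>_. UNIV) \<Longrightarrow> GB (restrict (\<rho> \<circ> the_inv_into A h) B) = GA \<rho>"
  shows "nu fB B GB = nu fA A GA"
proof -
  let ?h' = "the_inv_into A h"
  have h'h: "\<And>x. x \<in> A \<Longrightarrow> ?h' (h x) = x" using bij by (simp add: bij_betw_def the_inv_into_f_f)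
  have hh': "\<And>y. y \<in> B \<Longrightarrow> h (?h' y) = y" using bij by (simp add: f_the_inv_into_f_bij_betw)
  have h'B: "\<And>y. y \<in> B \<Longrightarrow> ?h' y \<in> A" using bij by (metis bij_betw_def the_inv_into_into order_refl)
  have hA: "\<And>x. x \<in> A \<Longrightarrow> h x \<in> B" using bij by (meson bij_betwE)
  show ?thesis unfolding nu_def
  proof (rule sum.reindex_bij_witness[where i = "\<lambda>\<rho>. restrict (\<rho> \<circ> ?h') B" and j = "\<lambda>\<pi>. restrict (\<pi> \<circ> h) A"])
    fix \<pi> :: "'b \<Rightarrow> bool" assume \<pi>: "\<pi> \<in> PiE B (\<lambda>_. UNIV)"
    show "restrict (restrict (\<pi> \<circ> h) A \<circ> ?h') B = \<pi>"
      using \<pi> h'B hh' by (auto simp: restrict_def fun_eq_iff PiE_def extensional_def)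
    show "restrict (\<pi> \<circ> h) A \<in> PiE A (\<lambda>_. UNIV)" by simp
    have iv: "restrict (restrict (\<pi> \<circ> h) A \<circ> ?h') B = \<pi>"
      using \<pi> h'B hh' by (auto simp: restrict_def fun_eq_iff PiE_def extensional_def)
    have g: "GA (restrict (\<pi> \<circ> h) A) = GB \<pi>" using G[of "restrict (\<pi> \<circ> h) A"] iv by simp
    have "wt fA A (restrict (\<pi> \<circ> h) A) = (\<Prod>x\<in>A. if \<pi> (h x) then fB (h x) else 1 - fB (h x))"
      unfolding wt_def by (rule prod.cong) (auto simp: fq)
    also have "\<dots> = wt fB B \<pi>" unfolding wt_def
      by (rule prod.reindex_bij_betw[OF bij, where g = "\<lambda>y. if \<pi> y then fB y else 1 - fB y"])
    finally show "(if GA (restrict (\<pi> \<circ> h) A) then wt fA A (restrict (\<pi> \<circ> h) A) else 0) =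
        (if GB \<pi> then wt fB B \<pi> else 0)" using g by simp
  next
    fix \<rho> :: "'a \<Rightarrow> bool" assume \<rho>: "\<rho> \<in> PiE A (\<lambda>_. UNIV)"
    show "restrict (restrict (\<rho> \<circ> ?h') B \<circ> h) A = \<rho>"
      using \<rho> hA h'h by (auto simp: restrict_def fun_eq_iff PiE_def extensional_def)
    show "restrict (\<rho> \<circ> ?h') B \<in> PiE B (\<lambda>_. UNIV)" by simp
  qed
qed

definition piso :: "('u\<Rightarrow>'u\<Rightarrow>bool) \<Rightarrow> ('u \<times> 'u) set \<Rightarrow> bool" where
  "piso R P \<longleftrightarrow> (\<forall>(x,y)\<in>P. \<forall>(x',y')\<in>P. (R x x' \<longleftrightarrow> R y y') \<and> (x = x' \<longleftrightarrow> y = y'))"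

lemma iso_from_piso:
  assumes "piso R P" "\<And>s. s \<in> T \<Longrightarrow> (tval e s, tval e' s) \<in> P"
  shows "isoR True R e e' T"
  using assms unfolding piso_def isoR_def by fast

lemma Tv_inst:
  assumes rado: "rado_model R" and st: "same_type_over R M a b" and P: "params \<phi> = {}"
    and fvp: "fv \<phi> \<subseteq> {..length a}" and pr: "\<And>k. k < length a \<Longrightarrow> \<pi> (b!k) = \<rho> (a!k)"
  shows "Tv R (set b) (inst 0 b \<phi>) \<pi> = Tv R (set a) (inst 0 a \<phi>) \<rho>"
proof -
  have n: "length b = length a" using st unfolding same_type_over_def by simp
  obtain u where u: "rp R (set a) \<rho> u" using rp_ex[OF rado] by blast
  obtain v where v: "rp R (set b) \<pi> v" using rp_ex[OF rado] by blast
  have Pa: "params (inst 0 a \<phi>) \<subseteq> set a" using params_inst[of 0 a \<phi>] P by simp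
  have Pb: "params (inst 0 b \<phi>) \<subseteq> set b" using params_inst[of 0 b \<phi>] P by simp
  have 1: "Tv R (set a) (inst 0 a \<phi>) \<rho> = sat UNIV R (envI 0 a (\<lambda>_. u)) \<phi>"
    using Tv_eq[OF rado _ Pa u order_refl] by (simp add: holds_def sat_inst)
  have 2: "Tv R (set b) (inst 0 b \<phi>) \<pi> = sat UNIV R (envI 0 b (\<lambda>_. v)) \<phi>"
    using Tv_eq[OF rado _ Pb v order_refl] by (simp add: holds_def sat_inst)
  define PP where "PP = insert (u, v) ((\<lambda>k. (a!k, b!k)) ` {..<length a})"
  have irr: "\<And>x. \<not> R x x" and sym: "\<And>x y. R x y \<Longrightarrow> R y x" using rado_irr[OF rado] rado_sym[OF rado] by blast+
  have uk: "\<And>k. k < length a \<Longrightarrow> R u (a!k) = R v (b!k) \<and> u \<noteq> a!k \<and> v \<noteq> b!k"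
  proof -
    fix k assume k: "k < length a"
    have "a!k \<in> set a" "b!k \<in> set b" using k n by auto
    then show "R u (a!k) = R v (b!k) \<and> u \<noteq> a!k \<and> v \<noteq> b!k" using u v pr[OF k] unfolding rp_def by auto
  qed
  have uk2: "\<And>k. k < length a \<Longrightarrow> R (a!k) u = R (b!k) v" using uk sym by blast
  have "piso R PP" unfolding piso_def PP_def
    using irr uk uk2 stp[OF st] by auto
  moreover have "\<And>s. s \<in> ts \<phi> \<Longrightarrow> (tval (envI 0 a (\<lambda>_. u)) s, tval (envI 0 b (\<lambda>_. v)) s) \<in> PP"
  proof -
    fix s assume s: "s \<in> ts \<phi>"
    then obtain i where i: "s = Var i" "i \<in> fv \<phi>" using P unfolding ts_def by auto
    then have "i \<le> length a" using fvp by auto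
    then show "(tval (envI 0 a (\<lambda>_. u)) s, tval (envI 0 b (\<lambda>_. v)) s) \<in> PP"
      using i n unfolding PP_def envI_def by auto
  qed
  ultimately have "isoR True R (envI 0 a (\<lambda>_. u)) (envI 0 b (\<lambda>_. v)) (ts \<phi>)" by (rule iso_from_piso)
  then have "sat UNIV R (envI 0 a (\<lambda>_. u)) \<phi> = sat UNIV R (envI 0 b (\<lambda>_. v)) \<phi>" using BF[OF rado] by blast
  then show ?thesis using 1 2 by simp
qed

lemma nu_inv:
  assumes rado: "rado_model R" and st: "same_type_over R M a b" and P: "params \<phi> = {}"
    and fvp: "fv \<phi> \<subseteq> {..length a}"
  shows "nu (qf R M W F p) (params (inst 0 a \<phi>)) (Tv R (params (inst 0 a \<phi>)) (inst 0 a \<phi>)) =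
         nu (qf R M W F p) (params (inst 0 b \<phi>)) (Tv R (params (inst 0 b \<phi>)) (inst 0 b \<phi>))"
proof -
  let ?f = "qf R M W F p"
  have n: "length b = length a" using st unfolding same_type_over_def by simp
  have Pa: "params (inst 0 a \<phi>) \<subseteq> set a" using params_inst[of 0 a \<phi>] P by simp
  have Pb: "params (inst 0 b \<phi>) \<subseteq> set b" using params_inst[of 0 b \<phi>] P by simp
  define h where "h = (\<lambda>x. b ! (SOME k. k < length a \<and> a!k = x))"
  have hk: "\<And>k. k < length a \<Longrightarrow> h (a!k) = b!k"
  proof -
    fix k assume k: "k < length a"
    have "\<exists>k'. k' < length a \<and> a!k' = a!k" using k by blast
    then have "(SOME k'. k' < length a \<and> a!k' = a!k) < length a \<and> a!(SOME k'. k' < length a \<and> a!k' = a!k) = a!k"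
      by (rule someI_ex)
    then show "h (a!k) = b!k" unfolding h_def using stp(2)[OF st _ k] by blast
  qed
  have bij: "bij_betw h (set a) (set b)"
  proof (rule bij_betw_imageI)
    show "inj_on h (set a)"
    proof (rule inj_onI)
      fix x y assume "x \<in> set a" "y \<in> set a" "h x = h y"
      then obtain k l where "k < length a" "l < length a" "x = a!k" "y = a!l" "b!k = b!l"
        using hk by (metis in_set_conv_nth)
      then show "x = y" using stp(2)[OF st] by blast
    qed
    show "h ` set a = set b"
    proof
      show "h ` set a \<subseteq> set b" using hk n by (auto simp: in_set_conv_nth) (metis nth_mem)
      show "set b \<subseteq> h ` set a"
      proof
        fix y assume "y \<in> set b"
        then obtain k where "k < length a" "y = b!k" using n by (auto simp: in_set_conv_nth)
        then show "y \<in> h ` set a" using hk by (metis nth_mem image_eqI)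
      qed
    qed
  qed
  have "nu ?f (set b) (Tv R (set b) (inst 0 b \<phi>)) = nu ?f (set a) (Tv R (set a) (inst 0 a \<phi>))"
  proof (rule nu_reindex[OF bij])
    show "finite (set a)" by simp
    show "\<And>x. x \<in> set a \<Longrightarrow> ?f (h x) = ?f x"
      using hk qf_st[OF st] by (metis in_set_conv_nth)
    fix \<rho> :: "'a \<Rightarrow> bool"
    have "\<And>k. k < length a \<Longrightarrow> restrict (\<rho> \<circ> the_inv_into (set a) h) (set b) (b!k) = \<rho> (a!k)"
    proof -
      fix k assume k: "k < length a"
      have "b!k \<in> set b" using k n by simp
      moreover have "the_inv_into (set a) h (b!k) = a!k"
        using hk[OF k] bij k by (metis bij_betw_def nth_mem the_inv_into_f_f)
      ultimately show "restrict (\<rho> \<circ> the_inv_into (set a) h) (set b) (b!k) = \<rho> (a!k)" by simp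
    qed
    then show "Tv R (set b) (inst 0 b \<phi>) (restrict (\<rho> \<circ> the_inv_into (set a) h) (set b)) = Tv R (set a) (inst 0 a \<phi>) \<rho>"
      by (rule Tv_inst[OF rado st P fvp])
  qed
  then show ?thesis using nuTv[OF rado _ Pa] nuTv[OF rado _ Pb] by simp
qed

theorem proposition4p17:
  fixes R :: "'u \<Rightarrow> 'u \<Rightarrow> bool" and M :: "'u set"
    and W :: "real \<Rightarrow> real \<Rightarrow> real" and F :: "('u \<Rightarrow> bool) \<Rightarrow> real"
  assumes "rado_model R" and "aleph1_saturated R"
    and "countable M" and "elem_sub R M"
    and "borel_graphon W"
    and "measure_iso (lam M) F"
  shows "\<exists>\<mu>. keisler_measure R \<mu> \<and> M_invariant R M \<mu> \<and>
           (\<forall>as bs cs ds E. is_basic M as bs cs ds E \<longrightarrow>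
               \<mu> (basic_fm as bs cs ds E) = muW R M W F as bs cs ds E) \<and>
           (\<forall>a. \<mu> (Eq (Var 0) (Par a)) = 0)"
proof -
  have rado: "rado_model R" by fact
  have bg: "borel_graphon W" by fact
  have Fm: "F \<in> lam M \<rightarrow>\<^sub>M unit_interval" using assms(6) unfolding measure_iso_def by blast
  interpret P: prob_space "lam M" by (rule prob_lam)
  let ?\<mu> = "muD R M W F"
  have K: "keisler_measure R ?\<mu>"
    unfolding keisler_measure_def
  proof (intro conjI ballI impI)
    fix \<phi> :: "'u fm"
    show "0 \<le> ?\<mu> \<phi>" unfolding muD_def
    proof (rule integral_nonneg_AE, rule AE_I2)
      fix p assume p: "p \<in> space (lam M)"
      show "0 \<le> nu (qf R M W F p) (params \<phi>) (Tv R (params \<phi>) \<phi>)"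
        by (rule nu_nonneg) (rule qf_bounds[OF bg Fm p])
    qed
  next
    fix \<phi> \<psi> :: "'u fm" assume h: "\<forall>u. holds R \<phi> u = holds R \<psi> u"
    show "?\<mu> \<phi> = ?\<mu> \<psi>" unfolding muD_def using nu_equiv[OF rado h] by simp
  next
    show "?\<mu> TT = 1" unfolding muD_def nu_TT using P.prob_space by simp
  next
    fix \<phi> \<psi> :: "'u fm" assume h: "\<forall>u. \<not> (holds R \<phi> u \<and> holds R \<psi> u)"
    show "?\<mu> (Disj \<phi> \<psi>) = ?\<mu> \<phi> + ?\<mu> \<psi>" unfolding muD_def nu_Disj[OF rado h]
      by (rule Bochner_Integration.integral_add; rule nu_integrable[OF bg Fm finite_params])
  qed
  have I: "M_invariant R M ?\<mu>"
    unfolding M_invariant_def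
  proof (intro allI impI)
    fix \<phi> :: "'u fm" and a b :: "'u list"
    assume "params \<phi> = {}" "fv \<phi> \<subseteq> {..length a}" "same_type_over R M a b"
    then show "?\<mu> (inst 0 a \<phi>) = ?\<mu> (inst 0 b \<phi>)" unfolding muD_def
      using nu_inv[OF rado] by simp
  qed
  have B: "\<forall>as bs cs ds E. is_basic M as bs cs ds E \<longrightarrow>
               ?\<mu> (basic_fm as bs cs ds E) = muW R M W F as bs cs ds E"
  proof (intro allI impI)
    fix as bs cs ds :: "'u list" and E
    assume ib: "is_basic M as bs cs ds E"
    show "?\<mu> (basic_fm as bs cs ds E) = muW R M W F as bs cs ds E"
      unfolding muD_def muW_def nu_basic[OF rado ib] by (cases "trivial_E R E") simp_all
  qed
  have E: "\<forall>a. ?\<mu> (Eq (Var 0) (Par a)) = 0"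
    unfolding muD_def using nu_Eq[OF rado] by simp
  show ?thesis using K I B E by blast
qed

end
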